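(* Let $g$ be a non-negative concave (differentiable) function on $(0,\infty)$ and fix $x>0$. Define $E(\alpha)=g(\alpha)\,g(x/\alpha)$ for $\alpha>0$. Suppose $\lim_{\alpha\to0^+}E(\alpha)=\lim_{\alpha\to+\infty}E(\alpha)=0$ and that $T_0(t)=t g'(t)/g(t)$ is one-to-one on $(0,\infty)$. Then $E$ attains its unique global maximum at $\alpha=\sqrt{x}$. *)

theory Defs
  imports "HOL-Analysis.Analysis"
begin

end

theory Submission
  imports Defs
begin

theorem lemma20:
  fixes g :: "real \<Rightarrow> real" and x :: real
  assumes nonneg: "\<And>t. t > 0 \<Longrightarrow> g t \<ge> 0"
    and conc: "concave_on {0<..} g"
    and diff: "\<And>t. t > 0 \<Longrightarrow> g differentiable (at t)"
    and xpos: "x > 0"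
    and lim0: "((\<lambda>a. g a * g (x / a)) \<longlongrightarrow> 0) (at_right 0)"
    and liminf: "((\<lambda>a. g a * g (x / a)) \<longlongrightarrow> 0) at_top"
    and inj: "inj_on (\<lambda>t. t * deriv g t / g t) {0<..}"
  shows "\<forall>a>0. a \<noteq> sqrt x \<longrightarrow> g a * g (x / a) < g (sqrt x) * g (x / sqrt x)"
proof -
  define E where "E = (\<lambda>a. g a * g (x / a))"
  have cv: "\<And>s u v w. s > 0 \<Longrightarrow> u > 0 \<Longrightarrow> v \<ge> 0 \<Longrightarrow> w \<ge> 0 \<Longrightarrow> v + w = 1 \<Longrightarrow>
      v * g s + w * g u \<le> g (v * s + w * u)"
  proof -
    fix s u v w :: real assume h: "s > 0" "u > 0" "v \<ge> 0" "w \<ge> 0" "v + w = 1"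
    have "- g (v * s + w * u) \<le> - (v * g s) - w * g u"
      using conc h unfolding concave_on_def convex_on_def by auto
    then show "v * g s + w * g u \<le> g (v * s + w * u)" by simp
  qed
  have gpos: "g t > 0" if "t > 0" for t
  proof (rule ccontr)
    assume "\<not> g t > 0"
    with nonneg that have g0: "g t = 0" by force
    have allz: "g s = 0" if "s > 0" for s
    proof -
      consider "s < t" | "s = t" | "s > t" by linarith
      then show ?thesis
      proof cases
        case 1
        define u where "u = 2 * t - s"
        have "(1/2) * g s + (1/2) * g u \<le> g ((1/2) * s + (1/2) * u)"
          using cv[of s u "1/2" "1/2"] \<open>s > 0\<close> 1 u_def by auto
        moreover have "(1/2) * s + (1/2) * u = t" using u_def by (simp add: field_simps)
        moreover have "g u \<ge> 0" using nonneg 1 u_def \<open>t>0\<close> by auto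
        ultimately show ?thesis using g0 nonneg[OF \<open>s>0\<close>] by auto
      next
        case 2 then show ?thesis using g0 by simp
      next
        case 3
        define u where "u = t / 2"
        have "(t/(2 * s - t)) * g s + (1 - t/(2 * s - t)) * g u \<le>
              g ((t/(2 * s - t)) * s + (1 - t/(2 * s - t)) * u)"
          using cv[of s u "t/(2 * s-t)" "1 - t/(2 * s-t)"] \<open>s > 0\<close> 3 u_def \<open>t>0\<close> by auto
        moreover have "(t/(2 * s - t)) * s + (1 - t/(2 * s - t)) * u = t"
        proof -
          have "2 * s - t \<noteq> 0" using 3 \<open>t>0\<close> by simp
          define v where "v = t / (2 * s - t)"
          have "v * (2 * s - t) = t" using \<open>2 * s - t \<noteq> 0\<close> v_def by simp
          have e: "v * s + (1 - v) * u = (v * (2 * s - t) + t) / 2"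
            using u_def by (simp add: algebra_simps)
          have "v * s + (1 - v) * u = t" unfolding e \<open>v * (2 * s - t) = t\<close> by simp
          then show ?thesis unfolding v_def .
        qed
        moreover have "g u \<ge> 0" using nonneg u_def \<open>t>0\<close> by auto
        moreover have "t/(2 * s - t) > 0" "1 - t/(2 * s - t) \<ge> 0" using 3 \<open>t>0\<close> by (auto simp: field_simps)
        ultimately have A: "(t/(2 * s - t)) * g s + (1 - t/(2 * s - t)) * g u \<le> 0"
          and B: "(1 - t/(2 * s - t)) * g u \<ge> 0" and C: "t/(2 * s - t) > 0"
          using g0 by auto
        have "(t/(2 * s - t)) * g s \<le> 0" using A B by linarith
        moreover have "g s > 0 \<Longrightarrow> (t/(2 * s - t)) * g s > 0"
          using C by (rule mult_pos_pos)
        ultimately have "g s \<le> 0" by linarith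
        then show ?thesis using nonneg[OF \<open>s>0\<close>] by linarith
      qed
    qed
    have "(\<lambda>t. t * deriv g t / g t) 1 = (\<lambda>t. t * deriv g t / g t) 2"
      using allz[of 1] allz[of 2] by simp
    then have "(1::real) = 2" by (rule inj_onD[OF inj]) auto
    then show False by simp
  qed
  have gder: "(g has_real_derivative deriv g t) (at t)" if "t > 0" for t
    using diff[OF that] DERIV_deriv_iff_real_differentiable by blast
  have Eder: "(E has_real_derivative
      (deriv g a * g (x/a) + g a * (deriv g (x/a) * (- x / a^2)))) (at a)" if "a > 0" for a
  proof -
    have d1: "((\<lambda>a. x / a) has_real_derivative (- x / a^2)) (at a)"
      using that by (auto intro!: derivative_eq_intros simp: power2_eq_square)
    have d2: "((\<lambda>a. g (x / a)) has_real_derivative deriv g (x/a) * (- x / a^2)) (at a)"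
      using DERIV_chain2[OF gder d1] that xpos by auto
    show ?thesis unfolding E_def using DERIV_mult[OF gder[OF that] d2] by (simp add: algebra_simps)
  qed
  have maxer: "m = sqrt x" if m: "m > 0" "\<And>y. y > 0 \<Longrightarrow> E y \<le> E m" for m
  proof -
    have "deriv g m * g (x/m) + g m * (deriv g (x/m) * (- x / m^2)) = 0"
    proof (rule DERIV_local_max[OF Eder[OF m(1)] m(1)])
      show "\<forall>y. \<bar>m - y\<bar> < m \<longrightarrow> E y \<le> E m" using m by auto
    qed
    hence "m * deriv g m * g (x/m) = (x/m) * deriv g (x/m) * g m"
      using m(1) by (simp add: field_simps power2_eq_square)
    hence "m * deriv g m / g m = (x/m) * deriv g (x/m) / g (x/m)"
      using gpos[OF m(1)] gpos[of "x/m"] m(1) xpos by (simp add: field_simps)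
    hence "m = x / m" using m(1) xpos by (rule_tac inj_onD[OF inj]) auto
    hence "m^2 = x" using m(1) by (simp add: field_simps power2_eq_square)
    thus ?thesis using m(1) by (metis real_sqrt_unique less_imp_le)
  qed
  have contE: "isCont E a" if "a > 0" for a using Eder[OF that] DERIV_isCont by blast
  define M where "M = E (sqrt x)"
  have Mpos: "M > 0" unfolding M_def E_def using gpos xpos by simp
  have "eventually (\<lambda>a. E a < M) (at_right 0)"
    using order_tendstoD(2)[OF lim0 Mpos] unfolding E_def by simp
  then obtain b where b: "b > 0" "\<And>y. y > 0 \<Longrightarrow> y < b \<Longrightarrow> E y < M"
    unfolding eventually_at_right_field by auto
  have "eventually (\<lambda>a. E a < M) at_top"
    using order_tendstoD(2)[OF liminf Mpos] unfolding E_def by simp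
  then obtain R where R: "\<And>y. y \<ge> R \<Longrightarrow> E y < M"
    unfolding eventually_at_top_linorder by auto
  define d where "d = min b (sqrt x)"
  define R' where "R' = max R (sqrt x)"
  have dpos: "d > 0" using b xpos d_def by simp
  have "\<exists>c\<in>{d..R'}. \<forall>y\<in>{d..R'}. E y \<le> E c"
  proof (rule continuous_attains_sup)
    show "{d..R'} \<noteq> {}" using d_def R'_def by auto
    show "continuous_on {d..R'} E"
      using contE dpos by (intro continuous_at_imp_continuous_on) auto
  qed auto
  then obtain c where c: "c \<in> {d..R'}" "\<And>y. y \<in> {d..R'} \<Longrightarrow> E y \<le> E c" by blast
  have "M \<le> E c" using c(2)[of "sqrt x"] d_def R'_def M_def by auto
  have cpos: "c > 0" using c(1) dpos by auto
  have cglob: "E y \<le> E c" if "y > 0" for y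
  proof (cases "y \<in> {d..R'}")
    case True then show ?thesis using c by auto
  next
    case False
    then have "y < b \<or> y \<ge> R" using d_def R'_def by auto
    then have "E y < M" using b R that by auto
    then show ?thesis using \<open>M \<le> E c\<close> by simp
  qed
  have csq: "c = sqrt x" using maxer[OF cpos cglob] .
  show ?thesis
  proof (intro allI impI)
    fix a :: real assume a: "a > 0" "a \<noteq> sqrt x"
    have le: "E a \<le> E (sqrt x)" using cglob[OF a(1)] csq by simp
    have "E a \<noteq> E (sqrt x)"
    proof
      assume eq: "E a = E (sqrt x)"
      have "a = sqrt x" using maxer[OF a(1)] cglob csq eq by simp
      with a show False by simp
    qed
    with le show "g a * g (x / a) < g (sqrt x) * g (x / sqrt x)" unfolding E_def by simp
  qed
qed

end
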